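(* Work in max-plus algebra. Consider the stochastic dynamic system $\bm{x}(k)=\bm{A}^{T}(k)\bm{x}(k-1)$, $k=1,2,\ldots$, with $\bm{x}(0)=\bm{1}$, where each $\bm{A}(k)$ is a random $n\times n$ block diagonal matrix \[ \bm{A}(k)=\begin{pmatrix}\bm{D}_{1}(k)&&\bm{0}\\&\ddots&\\ \bm{0}&&\bm{D}_{s}(k)\end{pmatrix} \] (block sizes independent of $k$). For $r=1,\ldots,s$ let $\bm{D}_{rk}=\bm{D}_{r}(1)\cdots\bm{D}_{r}(k)$ (max-plus product) and suppose that $\|\bm{D}_{rk}\|^{1/k}\to\mu_{r}$ with probability one as $k\to\infty$, i.e. $\frac1k\max_{i,j}(\bm{D}_{rk})_{ij}\to\mu_r$ w.p.1. Then the Lyapunov exponent of the system is \[ \lambda=\lim_{k\to\infty}\|\bm{x}(k)\|^{1/k}=\lim_{k\to\infty}\frac1k\max_{1\le i\le n}x_i(k)=\bigoplus_{r=1}^{s}\mu_r=\max_{1\le r\le s}\mu_r \] (with probability one).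
   Context: Max-plus algebra is $(\mathbb{R}\cup\{-\infty\},\oplus=\max,\otimes=+)$ with zero $\mathbb{0}=-\infty$ and identity $\mathbb{1}=0$; matrix products are $(\bm{A}\bm{C})_{ij}=\max_k(a_{ik}+c_{kj})$, and $\bm{0}$ denotes a block with all entries $-\infty$. $\bm{1}$ is the vector with all entries $0$. The tropical norm of a matrix or vector is the maximum of its entries, and scalar power $x^{1/k}$ means $x/k$. Standing assumptions on the system: each entry of $\bm{A}(k)$ is either a constant or a random variable; corresponding random entries of $\bm{A}(1),\bm{A}(2),\ldots$ are independent and identically distributed with finite expectation and variance (entries within one matrix need not be independent). Note $\bm{x}(k)=(\bm{A}(1)\cdots\bm{A}(k))^{T}\bm{x}(0)$. *)

theory Defs
  imports "HOL-Probability.Probability"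
begin

text \<open>Max-plus algebra over ereal: oplus = max (Sup), otimes = +, zero = -infinity, one = 0.
  Square d x d matrices are functions nat => nat => ereal, only indices < d matter.\<close>

definition mp_mult :: "nat \<Rightarrow> (nat \<Rightarrow> nat \<Rightarrow> ereal) \<Rightarrow> (nat \<Rightarrow> nat \<Rightarrow> ereal) \<Rightarrow> nat \<Rightarrow> nat \<Rightarrow> ereal" where
  "mp_mult d X Y i j = (SUP l\<in>{..<d}. X i l + Y l j)"

definition mp_id :: "nat \<Rightarrow> nat \<Rightarrow> ereal" where
  "mp_id i j = (if i = j then 0 else -\<infinity>)"

fun mp_prod :: "nat \<Rightarrow> (nat \<Rightarrow> nat \<Rightarrow> nat \<Rightarrow> ereal) \<Rightarrow> nat \<Rightarrow> nat \<Rightarrow> nat \<Rightarrow> ereal" where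
  "mp_prod d B 0 = mp_id"
| "mp_prod d B (Suc k) = mp_mult d (mp_prod d B k) (B (Suc k))"

definition mp_mat_norm :: "nat \<Rightarrow> (nat \<Rightarrow> nat \<Rightarrow> ereal) \<Rightarrow> ereal" where
  "mp_mat_norm d X = (SUP i\<in>{..<d}. SUP j\<in>{..<d}. X i j)"

definition mp_vec_norm :: "nat \<Rightarrow> (nat \<Rightarrow> ereal) \<Rightarrow> ereal" where
  "mp_vec_norm d x = (SUP i\<in>{..<d}. x i)"

text \<open>State of the system x(k) = A(k)^T x(k-1), x(0) = 1 (all-zero vector).\<close>
fun mp_state :: "nat \<Rightarrow> (nat \<Rightarrow> nat \<Rightarrow> nat \<Rightarrow> ereal) \<Rightarrow> nat \<Rightarrow> nat \<Rightarrow> ereal" where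
  "mp_state d A 0 = (\<lambda>i. 0)"
| "mp_state d A (Suc k) = (\<lambda>i. SUP j\<in>{..<d}. A (Suc k) j i + mp_state d A k j)"

text \<open>Block structure given by the list of block sizes ns: block r occupies indices
  blk_off ns r, ..., blk_off ns r + ns!r - 1.\<close>
definition blk_off :: "nat list \<Rightarrow> nat \<Rightarrow> nat" where
  "blk_off ns r = sum_list (take r ns)"

definition blk_of :: "nat list \<Rightarrow> nat \<Rightarrow> nat" where
  "blk_of ns i = (THE r. r < length ns \<and> blk_off ns r \<le> i \<and> i < blk_off ns r + ns ! r)"

definition diag_block :: "nat list \<Rightarrow> nat \<Rightarrow> (nat \<Rightarrow> nat \<Rightarrow> ereal) \<Rightarrow> nat \<Rightarrow> nat \<Rightarrow> ereal" where
  "diag_block ns r X a b = X (blk_off ns r + a) (blk_off ns r + b)"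

end

theory Submission imports Defs begin

lemma SUP_fin_Max: "finite S \<Longrightarrow> S \<noteq> {} \<Longrightarrow> (SUP x\<in>S. f x) = Max (f ` S)"
  for f :: "_ \<Rightarrow> ereal"
  by (simp add: cSup_eq_Max)

lemma SUP_fin_not_inf:
  fixes f :: "_ \<Rightarrow> ereal"
  assumes "finite S" "\<forall>x\<in>S. f x \<noteq> \<infinity>"
  shows "(SUP x\<in>S. f x) \<noteq> \<infinity>"
proof (cases "S = {}")
  case True then show ?thesis by (simp add: bot_ereal_def)
next
  case False
  then have "Max (f ` S) \<in> f ` S" using assms by (intro Max_in) auto
  then obtain x where "x \<in> S" "Max (f ` S) = f x" by auto
  then show ?thesis using assms False by (simp add: SUP_fin_Max)
qed

lemma add_SUP_fin:
  fixes f :: "_ \<Rightarrow> ereal"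
  assumes "finite S" "S \<noteq> {}"
  shows "a + (SUP x\<in>S. f x) = (SUP x\<in>S. a + f x)"
proof -
  have m: "mono (\<lambda>x::ereal. a + x)" by (rule monoI) (simp add: add_left_mono)
  have "a + Max (f ` S) = Max ((\<lambda>x. a + x) ` f ` S)"
    using assms by (intro mono_Max_commute[OF m]) auto
  then show ?thesis using assms by (simp add: SUP_fin_Max image_image)
qed

lemma minf_add: "x \<noteq> \<infinity> \<Longrightarrow> -\<infinity> + x = (-\<infinity>::ereal)" "x \<noteq> \<infinity> \<Longrightarrow> x + -\<infinity> = (-\<infinity>::ereal)"
  by (cases x; simp)+

lemma add_not_inf: "a \<noteq> \<infinity> \<Longrightarrow> b \<noteq> \<infinity> \<Longrightarrow> a + b \<noteq> (\<infinity>::ereal)"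
  by (cases a; cases b; simp)

lemma mp_prod_not_inf:
  assumes "\<forall>k i j. B k i j \<noteq> \<infinity>"
  shows "mp_prod d B k i j \<noteq> \<infinity>"
proof (induction k arbitrary: i j)
  case 0 then show ?case by (simp add: mp_id_def)
next
  case (Suc k)
  have "\<forall>l\<in>{..<d}. mp_prod d B k i l + B (Suc k) l j \<noteq> \<infinity>"
    using Suc assms by (auto simp: add_not_inf)
  then show ?case
    by (simp add: mp_mult_def SUP_fin_not_inf)
qed

lemma sum_take_Suc: "r < length ns \<Longrightarrow> blk_off ns (Suc r) = blk_off ns r + ns ! r"
  by (simp add: blk_off_def take_Suc_conv_app_nth)

lemma blk_off_mono: "r \<le> r' \<Longrightarrow> blk_off ns r \<le> blk_off ns r'"
proof (induction r' rule: dec_induct)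
  case base then show ?case by simp
next
  case (step m)
  then show ?case
    by (cases "m < length ns") (auto simp: sum_take_Suc, simp add: blk_off_def)
qed

lemma blk_exists_gen: "i < sum_list (ns::nat list) \<Longrightarrow> \<exists>r<length ns. sum_list (take r ns) \<le> i \<and> i < sum_list (take r ns) + ns ! r"
proof (induction ns arbitrary: i)
  case Nil then show ?case by simp
next
  case (Cons x xs)
  show ?case
  proof (cases "i < x")
    case True then show ?thesis by (intro exI[of _ 0]) auto
  next
    case False
    then obtain r where "r < length xs" "sum_list (take r xs) \<le> i - x" "i - x < sum_list (take r xs) + xs ! r"
      using Cons by (metis add_diff_inverse_nat nat_add_left_cancel_less sum_list.Cons)
    then show ?thesis using False by (intro exI[of _ "Suc r"]) auto
  qed
qed

lemma blk_exists: "i < sum_list ns \<Longrightarrow> \<exists>r<length ns. blk_off ns r \<le> i \<and> i < blk_off ns r + ns ! r"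
  using blk_exists_gen unfolding blk_off_def by blast

lemma blk_uniq:
  assumes "r < length ns" "r' < length ns" "blk_off ns r \<le> i" "i < blk_off ns r + ns ! r"
    "blk_off ns r' \<le> i" "i < blk_off ns r' + ns ! r'"
  shows "r = r'"
proof (rule ccontr)
  assume "r \<noteq> r'"
  then consider "r < r'" | "r' < r" by linarith
  then show False
  proof cases
    case 1
    then have "blk_off ns (Suc r) \<le> blk_off ns r'" by (intro blk_off_mono) simp
    then show False using assms sum_take_Suc[of r ns] by simp
  next
    case 2
    then have "blk_off ns (Suc r') \<le> blk_off ns r" by (intro blk_off_mono) simp
    then show False using assms sum_take_Suc[of r' ns] by simp
  qed
qed

lemma blk_of_eq:
  assumes "r < length ns" "blk_off ns r \<le> i" "i < blk_off ns r + ns ! r"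
  shows "blk_of ns i = r"
  unfolding blk_of_def
proof (rule the_equality)
  show "r < length ns \<and> blk_off ns r \<le> i \<and> i < blk_off ns r + ns ! r" using assms by simp
next
  fix r' assume h: "r' < length ns \<and> blk_off ns r' \<le> i \<and> i < blk_off ns r' + ns ! r'"
  show "r' = r" using blk_uniq[of r ns r' i] assms h by simp
qed

lemma blk_end: "r < length ns \<Longrightarrow> blk_off ns r + ns ! r \<le> sum_list ns"
  using blk_off_mono[of "Suc r" "length ns" ns] sum_take_Suc[of r ns] by (simp add: blk_off_def)

lemma tendsto_Max_fin:
  fixes f :: "'i \<Rightarrow> 'a \<Rightarrow> ereal"
  assumes "finite S" "S \<noteq> {}" "\<forall>r\<in>S. (f r \<longlongrightarrow> l r) F"
  shows "((\<lambda>k. Max ((\<lambda>r. f r k) ` S)) \<longlongrightarrow> Max (l ` S)) F"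
  using assms
proof (induction S rule: finite_ne_induct)
  case (singleton x) then show ?case by simp
next
  case (insert x S)
  then show ?case by (simp add: tendsto_max)
qed


lemma block_prod:
  fixes B :: "nat \<Rightarrow> nat \<Rightarrow> nat \<Rightarrow> ereal" and ns :: "nat list"
  assumes n: "n = sum_list ns"
    and ninf: "\<forall>k i j. B k i j \<noteq> \<infinity>"
    and cross: "\<forall>k i j. i < n \<and> j < n \<and> blk_of ns i \<noteq> blk_of ns j \<longrightarrow> B k i j = -\<infinity>"
    and r: "r < length ns"
  shows "\<forall>a j. a < ns ! r \<and> j < n \<longrightarrow> mp_prod n B k (blk_off ns r + a) j =
     (if blk_off ns r \<le> j \<and> j < blk_off ns r + ns ! r
      then mp_prod (ns ! r) (\<lambda>k. diag_block ns r (B k)) k a (j - blk_off ns r) else -\<infinity>)"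
proof (induction k)
  case 0
  then show ?case by (auto simp: mp_id_def)
next
  case (Suc k)
  let ?o = "blk_off ns r" and ?d = "ns ! r"
  let ?D = "mp_prod ?d (\<lambda>k. diag_block ns r (B k))"
  have endn: "?o + ?d \<le> n" using blk_end[OF r] n by simp
  have br: "blk_of ns (?o + c) = r" if "c < ?d" for c using blk_of_eq[OF r] that by simp
  have Pninf: "mp_prod n B k i l \<noteq> \<infinity>" for i l using mp_prod_not_inf[OF ninf] .
  show ?case
  proof (intro allI impI)
    fix a j assume aj: "a < ?d \<and> j < n"
    have IH: "mp_prod n B k (?o + a) l = (if ?o \<le> l \<and> l < ?o + ?d then ?D k a (l - ?o) else -\<infinity>)"
      if "l < n" for l using Suc aj that by blast
    show "mp_prod n B (Suc k) (?o + a) j =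
     (if ?o \<le> j \<and> j < ?o + ?d then ?D (Suc k) a (j - ?o) else -\<infinity>)"
    proof (cases "?o \<le> j \<and> j < ?o + ?d")
      case True
      define b where "b = j - ?o"
      have jb: "j = ?o + b" "b < ?d" using True b_def by auto
      have "mp_prod n B (Suc k) (?o + a) j = ?D (Suc k) a b"
      proof (rule antisym)
        show "mp_prod n B (Suc k) (?o + a) j \<le> ?D (Suc k) a b"
          unfolding mp_prod.simps mp_mult_def
        proof (rule SUP_least)
          fix l assume l: "l \<in> {..<n}"
          show "mp_prod n B k (?o + a) l + B (Suc k) l j \<le> (SUP c\<in>{..<?d}. ?D k a c + diag_block ns r (B (Suc k)) c b)"
          proof (cases "?o \<le> l \<and> l < ?o + ?d")
            case True
            define c where "c = l - ?o"
            have c: "l = ?o + c" "c < ?d" using True unfolding c_def by linarith+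
            show ?thesis using IH[of l] l c jb
              by (intro SUP_upper2[of c]) (auto simp: diag_block_def)
          next
            case False
            then have "mp_prod n B k (?o + a) l = -\<infinity>" using IH[of l] l by auto
            then show ?thesis using ninf by (simp add: minf_add)
          qed
        qed
      next
        show "?D (Suc k) a b \<le> mp_prod n B (Suc k) (?o + a) j"
          unfolding mp_prod.simps mp_mult_def
        proof (rule SUP_least)
          fix c assume c: "c \<in> {..<?d}"
          have "?o + c < n" using c endn by simp
          then show "?D k a c + diag_block ns r (B (Suc k)) c b \<le> (SUP l\<in>{..<n}. mp_prod n B k (?o + a) l + B (Suc k) l j)"
            using IH[of "?o + c"] c jb
            by (intro SUP_upper2[of "?o + c"]) (auto simp: diag_block_def)
        qed
      qed
      then show ?thesis using True b_def by simp
    next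
      case False
      obtain r' where r': "r' < length ns" "blk_off ns r' \<le> j" "j < blk_off ns r' + ns ! r'"
        using blk_exists[of j ns] aj n by auto
      have "r' \<noteq> r" using False r' by auto
      then have bj: "blk_of ns j \<noteq> r" using blk_of_eq[OF r'] by simp
      have "mp_prod n B (Suc k) (?o + a) j \<le> -\<infinity>"
        unfolding mp_prod.simps mp_mult_def
      proof (rule SUP_least)
        fix l assume l: "l \<in> {..<n}"
        show "mp_prod n B k (?o + a) l + B (Suc k) l j \<le> -\<infinity>"
        proof (cases "?o \<le> l \<and> l < ?o + ?d")
          case True
          define c where "c = l - ?o"
            have c: "l = ?o + c" "c < ?d" using True unfolding c_def by linarith+
          have "blk_of ns l \<noteq> blk_of ns j" using br[OF c(2)] c bj by simp
          then have "B (Suc k) l j = -\<infinity>" using cross l aj by blast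
          then show ?thesis using Pninf by (simp add: minf_add)
        next
          case False
          then have "mp_prod n B k (?o + a) l = -\<infinity>" using IH[of l] l by auto
          then show ?thesis using ninf by (simp add: minf_add)
        qed
      qed
      then have "mp_prod n B (Suc k) (?o + a) j = -\<infinity>" by simp
      then show ?thesis using False by (subst if_not_P) auto
    qed
  qed
qed


lemma state_eq:
  fixes B :: "nat \<Rightarrow> nat \<Rightarrow> nat \<Rightarrow> ereal"
  assumes "0 < n"
  shows "\<forall>i<n. mp_state n B k i = (SUP j\<in>{..<n}. mp_prod n B k j i)"
proof (induction k)
  case 0
  show ?case
  proof (intro allI impI)
    fix i assume i: "i < n"
    have "(SUP j\<in>{..<n}. mp_id j i) = 0"
    proof (rule antisym)
      show "(SUP j\<in>{..<n}. mp_id j i) \<le> 0" by (rule SUP_least) (simp add: mp_id_def)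
      show "0 \<le> (SUP j\<in>{..<n}. mp_id j i)" using i by (intro SUP_upper2[of i]) (auto simp: mp_id_def)
    qed
    then show "mp_state n B 0 i = (SUP j\<in>{..<n}. mp_prod n B 0 j i)" by simp
  qed
next
  case (Suc k)
  show ?case
  proof (intro allI impI)
    fix i assume i: "i < n"
    have ne: "{..<n} \<noteq> {}" using assms by auto
    have "mp_state n B (Suc k) i = (SUP j\<in>{..<n}. B (Suc k) j i + (SUP l\<in>{..<n}. mp_prod n B k l j))"
      using Suc by simp
    also have "\<dots> = (SUP j\<in>{..<n}. SUP l\<in>{..<n}. B (Suc k) j i + mp_prod n B k l j)"
      using ne by (simp add: add_SUP_fin)
    also have "\<dots> = (SUP l\<in>{..<n}. SUP j\<in>{..<n}. B (Suc k) j i + mp_prod n B k l j)"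
      by (rule SUP_commute)
    also have "\<dots> = (SUP l\<in>{..<n}. mp_prod n B (Suc k) l i)"
      by (simp add: mp_mult_def add.commute)
    finally show "mp_state n B (Suc k) i = (SUP j\<in>{..<n}. mp_prod n B (Suc k) j i)" .
  qed
qed

lemma norm_eq:
  fixes B :: "nat \<Rightarrow> nat \<Rightarrow> nat \<Rightarrow> ereal" and ns :: "nat list"
  assumes n: "n = sum_list ns" and ne: "ns \<noteq> []" and pos: "\<forall>r<length ns. 0 < ns ! r"
    and ninf: "\<forall>k i j. B k i j \<noteq> \<infinity>"
    and cross: "\<forall>k i j. i < n \<and> j < n \<and> blk_of ns i \<noteq> blk_of ns j \<longrightarrow> B k i j = -\<infinity>"
  shows "mp_vec_norm n (mp_state n B k) =
    Max ((\<lambda>r. mp_mat_norm (ns ! r) (mp_prod (ns ! r) (\<lambda>k. diag_block ns r (B k)) k)) ` {..<length ns})"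
proof -
  let ?P = "mp_prod n B k"
  let ?N = "\<lambda>r. mp_mat_norm (ns ! r) (mp_prod (ns ! r) (\<lambda>k. diag_block ns r (B k)) k)"
  have "0 < ns ! 0" using pos ne by auto
  moreover have "ns ! 0 \<le> n" using blk_end[of 0 ns] ne n by (simp add: blk_off_def)
  ultimately have npos: "0 < n" by simp
  have "mp_vec_norm n (mp_state n B k) = (SUP i\<in>{..<n}. SUP j\<in>{..<n}. ?P j i)"
    unfolding mp_vec_norm_def using state_eq[OF npos, of B k] by (intro SUP_cong) auto
  also have "\<dots> = (SUP i\<in>{..<n}. SUP j\<in>{..<n}. ?P i j)" by (rule SUP_commute)
  also have "\<dots> = Max (?N ` {..<length ns})"
  proof (rule antisym)
    show "(SUP i\<in>{..<n}. SUP j\<in>{..<n}. ?P i j) \<le> Max (?N ` {..<length ns})"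
    proof (intro SUP_least)
      fix i j assume i: "i \<in> {..<n}" and j: "j \<in> {..<n}"
      obtain r where r: "r < length ns" "blk_off ns r \<le> i" "i < blk_off ns r + ns ! r"
        using blk_exists[of i ns] i n by auto
      define a where "a = i - blk_off ns r"
      have ia: "i = blk_off ns r + a" "a < ns ! r" using r a_def by auto
      have eq: "?P i j = (if blk_off ns r \<le> j \<and> j < blk_off ns r + ns ! r
        then mp_prod (ns ! r) (\<lambda>k. diag_block ns r (B k)) k a (j - blk_off ns r) else -\<infinity>)"
        using block_prod[OF n ninf cross r(1), of k] ia j by auto
      show "?P i j \<le> Max (?N ` {..<length ns})"
      proof (cases "blk_off ns r \<le> j \<and> j < blk_off ns r + ns ! r")
        case True
        have "?P i j \<le> ?N r"
          unfolding eq mp_mat_norm_def using True ia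
          by (intro SUP_upper2[of a] SUP_upper2[of "j - blk_off ns r"]) auto
        also have "\<dots> \<le> Max (?N ` {..<length ns})" using r by (intro Max_ge) auto
        finally show ?thesis .
      next
        case False
        then have "?P i j = -\<infinity>" using eq by auto
        then show ?thesis by simp
      qed
    qed
  next
    show "Max (?N ` {..<length ns}) \<le> (SUP i\<in>{..<n}. SUP j\<in>{..<n}. ?P i j)"
    proof (rule Max.boundedI)
      show "finite (?N ` {..<length ns})" by simp
      show "?N ` {..<length ns} \<noteq> {}" using ne by (simp add: lessThan_empty_iff)
    next
      fix x assume "x \<in> ?N ` {..<length ns}"
      then obtain r where r: "r < length ns" and x: "x = ?N r" by auto
      have endn: "blk_off ns r + ns ! r \<le> n" using blk_end[OF r] n by simp
      show "x \<le> (SUP i\<in>{..<n}. SUP j\<in>{..<n}. ?P i j)"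
        unfolding x mp_mat_norm_def
      proof (intro SUP_least)
        fix a b assume a: "a \<in> {..<ns ! r}" and b: "b \<in> {..<ns ! r}"
        have "?P (blk_off ns r + a) (blk_off ns r + b) = mp_prod (ns ! r) (\<lambda>k. diag_block ns r (B k)) k a b"
          using block_prod[OF n ninf cross r, of k] a b endn by auto
        then show "mp_prod (ns ! r) (\<lambda>k. diag_block ns r (B k)) k a b \<le> (SUP i\<in>{..<n}. SUP j\<in>{..<n}. ?P i j)"
          using a b endn
          by (intro SUP_upper2[of "blk_off ns r + a"] SUP_upper2[of "blk_off ns r + b"]) auto
      qed
    qed
  qed
  finally show ?thesis .
qed


theorem lemma2:
  fixes M :: "'w measure" and A :: "nat \<Rightarrow> 'w \<Rightarrow> nat \<Rightarrow> nat \<Rightarrow> ereal"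
    and ns :: "nat list" and n :: nat and \<mu> :: "nat \<Rightarrow> ereal"
  assumes "prob_space M"
    and "ns \<noteq> []" and "\<forall>r<length ns. 0 < ns ! r" and "n = sum_list ns"
    and "\<forall>k \<omega> i j. A k \<omega> i j \<noteq> \<infinity>"
    and "\<forall>k \<omega> i j. i < n \<and> j < n \<and> blk_of ns i \<noteq> blk_of ns j \<longrightarrow> A k \<omega> i j = -\<infinity>"
    and "\<forall>r<length ns. AE \<omega> in M.
           (\<lambda>k. mp_mat_norm (ns ! r) (mp_prod (ns ! r) (\<lambda>k. diag_block ns r (A k \<omega>)) k) / ereal (real k))
             \<longlonglongrightarrow> \<mu> r"
  shows "AE \<omega> in M.
           (\<lambda>k. mp_vec_norm n (mp_state n (\<lambda>k. A k \<omega>) k) / ereal (real k))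
             \<longlonglongrightarrow> Max (\<mu> ` {..<length ns})"
proof -
  have "AE \<omega> in M. \<forall>r\<in>{..<length ns}.
           (\<lambda>k. mp_mat_norm (ns ! r) (mp_prod (ns ! r) (\<lambda>k. diag_block ns r (A k \<omega>)) k) / ereal (real k))
             \<longlonglongrightarrow> \<mu> r"
    using assms(7) by (intro AE_finite_allI) auto
  then show ?thesis
  proof (rule AE_mp, intro AE_I2 impI)
    fix \<omega>
    let ?N = "\<lambda>r k. mp_mat_norm (ns ! r) (mp_prod (ns ! r) (\<lambda>k. diag_block ns r (A k \<omega>)) k)"
    assume H: "\<forall>r\<in>{..<length ns}. (\<lambda>k. ?N r k / ereal (real k)) \<longlonglongrightarrow> \<mu> r"
    have ne: "{..<length ns} \<noteq> {}" using assms(2) by (simp add: lessThan_empty_iff)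
    have lim: "(\<lambda>k. Max ((\<lambda>r. ?N r k / ereal (real k)) ` {..<length ns})) \<longlonglongrightarrow> Max (\<mu> ` {..<length ns})"
      using H ne by (intro tendsto_Max_fin) auto
    have ev: "\<forall>\<^sub>F k in sequentially. Max ((\<lambda>r. ?N r k / ereal (real k)) ` {..<length ns}) =
         mp_vec_norm n (mp_state n (\<lambda>k. A k \<omega>) k) / ereal (real k)"
    proof (rule eventually_sequentiallyI[of 1])
      fix k :: nat assume k: "1 \<le> k"
      have m: "mono (\<lambda>x::ereal. x / ereal (real k))"
        using k by (intro monoI ereal_divide_right_mono) auto
      have "mp_vec_norm n (mp_state n (\<lambda>k. A k \<omega>) k) = Max ((\<lambda>r. ?N r k) ` {..<length ns})"
        using assms by (intro norm_eq) auto
      then have "mp_vec_norm n (mp_state n (\<lambda>k. A k \<omega>) k) / ereal (real k)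
          = Max ((\<lambda>x. x / ereal (real k)) ` (\<lambda>r. ?N r k) ` {..<length ns})"
        using ne by (simp add: mono_Max_commute[OF m])
      then show "Max ((\<lambda>r. ?N r k / ereal (real k)) ` {..<length ns}) =
         mp_vec_norm n (mp_state n (\<lambda>k. A k \<omega>) k) / ereal (real k)"
        by (simp add: image_image)
    qed
    show "(\<lambda>k. mp_vec_norm n (mp_state n (\<lambda>k. A k \<omega>) k) / ereal (real k)) \<longlonglongrightarrow> Max (\<mu> ` {..<length ns})"
      using Lim_transform_eventually[OF lim ev] .
  qed
qed

end
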